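(* Let $\ell:\mathcal{H}\times\mathcal{Z}\times\mathcal{Z}\to[0,B]$ be a $B$-bounded pairwise loss with $\mathcal{R}_s(\ell\circ\mathcal{H})=C_d\cdot O(\sqrt{1/s})$, let $z_1,\dots,z_n$ be a stream, and suppose an online learning algorithm incurs buffer penalties based on a buffer of size $s$ updated with the RS-x algorithm (described below) and generates an ensemble $h_1,\dots,h_{n-1}$. Then with probability at least $1-\delta$ over the random variables used to update the buffer, \[ \mathfrak{R}_n\le\mathfrak{R}^{\mathrm{buf}}_n+C_d\,(n-1)\cdot O\!\left(\sqrt{\frac{\log\frac n\delta}{s}}\right), \] where $\mathfrak{R}_n=\sum_{t=2}^n\hat{\mathcal{L}}_t(h_{t-1})-\inf_{h\in\mathcal{H}}\sum_{t=2}^n\hat{\mathcal{L}}_t(h)$ and $\mathfrak{R}^{\mathrm{buf}}_n=\sum_{t=2}^n\hat{\mathcal{L}}^{\mathrm{buf}}_t(h_{t-1})-\inf_{h\in\mathcal{H}}\sum_{t=2}^n\hat{\mathcal{L}}^{\mathrm{buf}}_t(h)$.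
   Context: All-pairs penalty $\hat{\mathcal{L}}_t(h)=\frac1{t-1}\sum_{\tau=1}^{t-1}\ell(h,z_t,z_\tau)$; buffer penalty $\hat{\mathcal{L}}^{\mathrm{buf}}_t(h)=\frac1{|B_t|}\sum_{z\in B_t}\ell(h,z_t,z)$, with $B_t$ the buffer after processing $z_1,\dots,z_{t-1}$. RS-x update with the point $z_t$ at step $t$: if $|B|<s$, add $z_t$; else if $t=s+1$, replace $B$ by $s$ points sampled uniformly with replacement from $B\cup\{z_t\}$; else independently replace each buffer entry by $z_t$ with probability $1/t$. $\mathcal{R}_s(\ell\circ\mathcal{H})=\mathbb{E}[\sup_h\frac1s\sum_{j=1}^s\epsilon_j\ell(h,z,z_j)]$; $C_d$ is its dependence on the input dimension $d$; $O(\cdot)$ hides constants such as $B$. The infimum over $\mathcal{H}$ of $\sum_t\hat{\mathcal{L}}_t$ is assumed attained. *)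

theory Defs
  imports "HOL-Probability.Probability"
begin

definition rademacher :: "('h \<Rightarrow> 'z \<Rightarrow> 'z \<Rightarrow> real) \<Rightarrow> 'h set \<Rightarrow> 'z pmf \<Rightarrow> 'z \<Rightarrow> nat \<Rightarrow> real" where
  "rademacher l H D z s =
     measure_pmf.expectation
       (pair_pmf (Pi_pmf {..<s} undefined (\<lambda>_. D))
                 (Pi_pmf {..<s} 0 (\<lambda>_. pmf_of_set {-1, 1::real})))
       (\<lambda>(w, eps). SUP h\<in>H. (1 / real s) * (\<Sum>j<s. eps j * l h z (w j)))"

definition rsx_step :: "nat \<Rightarrow> nat \<Rightarrow> 'z \<Rightarrow> 'z list \<Rightarrow> 'z list pmf" where
  "rsx_step s t zt Bf =
     (if length Bf < s then return_pmf (Bf @ [zt])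
      else if t = s + 1 then
        map_pmf (\<lambda>f. map f [0..<s])
          (Pi_pmf {..<s} undefined (\<lambda>_. map_pmf (\<lambda>i. (Bf @ [zt]) ! i) (pmf_of_set {..<s+1})))
      else
        map_pmf (\<lambda>f. map f [0..<length Bf])
          (Pi_pmf {..<length Bf} undefined
             (\<lambda>i. map_pmf (\<lambda>b. if b then zt else Bf ! i) (bernoulli_pmf (1 / real t)))))"

text \<open>Joint law of the buffers: rsx_traj s z m is a distribution over functions Bs with
  Bs t = B_t (the buffer after processing z 1, ..., z (t-1)) for 1 \<le> t \<le> m.\<close>
primrec rsx_traj :: "nat \<Rightarrow> (nat \<Rightarrow> 'z) \<Rightarrow> nat \<Rightarrow> (nat \<Rightarrow> 'z list) pmf" where
  "rsx_traj s z 0 = return_pmf (\<lambda>_. [])"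
| "rsx_traj s z (Suc k) =
     (if k = 0 then return_pmf (\<lambda>_. [])
      else bind_pmf (rsx_traj s z k)
             (\<lambda>Bs. map_pmf (\<lambda>B'. Bs(Suc k := B')) (rsx_step s k (z k) (Bs k))))"

definition pen_all :: "('h \<Rightarrow> 'z \<Rightarrow> 'z \<Rightarrow> real) \<Rightarrow> (nat \<Rightarrow> 'z) \<Rightarrow> nat \<Rightarrow> 'h \<Rightarrow> real" where
  "pen_all l z t h = (1 / real (t - 1)) * (\<Sum>\<tau>=1..t-1. l h (z t) (z \<tau>))"

definition pen_buf :: "('h \<Rightarrow> 'z \<Rightarrow> 'z \<Rightarrow> real) \<Rightarrow> (nat \<Rightarrow> 'z) \<Rightarrow> (nat \<Rightarrow> 'z list) \<Rightarrow> nat \<Rightarrow> 'h \<Rightarrow> real" where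
  "pen_buf l z Bs t h = (\<Sum>w\<leftarrow>Bs t. l h (z t) w) / real (length (Bs t))"

definition regret_all :: "('h \<Rightarrow> 'z \<Rightarrow> 'z \<Rightarrow> real) \<Rightarrow> 'h set \<Rightarrow> (nat \<Rightarrow> 'z) \<Rightarrow> nat \<Rightarrow> (nat \<Rightarrow> 'h) \<Rightarrow> real" where
  "regret_all l H z n hs =
     (\<Sum>t=2..n. pen_all l z t (hs (t - 1))) - (INF g\<in>H. \<Sum>t=2..n. pen_all l z t g)"

definition regret_buf :: "('h \<Rightarrow> 'z \<Rightarrow> 'z \<Rightarrow> real) \<Rightarrow> 'h set \<Rightarrow> (nat \<Rightarrow> 'z) \<Rightarrow> (nat \<Rightarrow> 'z list) \<Rightarrow> nat \<Rightarrow> (nat \<Rightarrow> 'h) \<Rightarrow> real" where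
  "regret_buf l H z Bs n hs =
     (\<Sum>t=2..n. pen_buf l z Bs t (hs (t - 1))) - (INF g\<in>H. \<Sum>t=2..n. pen_buf l z Bs t g)"

end

theory Submission
  imports Defs
begin
lemma exp_bind_fin:
  fixes h :: "'b \<Rightarrow> real"
  assumes "finite (set_pmf p)" "\<And>x. x \<in> set_pmf p \<Longrightarrow> finite (set_pmf (f x))"
  shows "measure_pmf.expectation (bind_pmf p f) h =
         measure_pmf.expectation p (\<lambda>x. measure_pmf.expectation (f x) h)"
proof -
  have "measure_pmf.expectation (bind_pmf p f) h =
        (\<Sum>a\<in>set_pmf p. pmf p a *\<^sub>R measure_pmf.expectation (f a) h)"
    using assms by (intro pmf_expectation_bind) auto
  also have "\<dots> = measure_pmf.expectation p (\<lambda>x. measure_pmf.expectation (f x) h)"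
    using assms by (subst integral_measure_pmf[where A="set_pmf p"]) auto
  finally show ?thesis .
qed

lemma finite_set_Pi_pmf:
  assumes "finite A" "\<And>i. i \<in> A \<Longrightarrow> finite (set_pmf (p i))"
  shows "finite (set_pmf (Pi_pmf A d p))"
proof -
  have "set_pmf (Pi_pmf A d p) = PiE_dflt A d (\<lambda>i. set_pmf (p i))"
    using assms by (simp add: set_Pi_pmf o_def)
  moreover have "finite (PiE_dflt A d (\<lambda>i. set_pmf (p i)))"
    using assms by (intro finite_PiE_dflt) auto
  ultimately show ?thesis by simp
qed

lemma hoeffding_pmf:
  fixes G :: "'a \<Rightarrow> real"
  assumes "finite (set_pmf q)" "l > 0" "\<And>y. G y \<in> {a..b}"
  shows "measure_pmf.expectation q (\<lambda>y. exp (l * (G y - measure_pmf.expectation q G)))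
         \<le> exp (l\<^sup>2 * (b - a)\<^sup>2 / 8)"
proof -
  interpret interval_bounded_random_variable "measure_pmf q" G a b
    by unfold_locales (use assms in auto)
  have "ennreal (measure_pmf.expectation q (\<lambda>y. exp (l * (G y - measure_pmf.expectation q G))))
        = nn_integral q (\<lambda>y. exp (l * (G y - measure_pmf.expectation q G)))"
    using assms by (intro nn_integral_eq_integral[symmetric] integrable_measure_pmf_finite) auto
  also have "\<dots> \<le> ennreal (exp (l\<^sup>2 * (b - a)\<^sup>2 / 8))"
    using Hoeffdings_lemma_nn_integral[OF assms(2)] by simp
  finally show ?thesis by (simp add: ennreal_le_iff)
qed

lemma mcdiarmid_mgf:
  fixes F :: "('i \<Rightarrow> 'a) \<Rightarrow> real"
  assumes "finite A" "\<And>i. i \<in> A \<Longrightarrow> finite (set_pmf (p i))" "l > 0"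
    "\<And>i f g. i \<in> A \<Longrightarrow> (\<And>j. j \<noteq> i \<Longrightarrow> f j = g j) \<Longrightarrow> \<bar>F f - F g\<bar> \<le> c"
  shows "measure_pmf.expectation (Pi_pmf A d p)
           (\<lambda>f. exp (l * (F f - measure_pmf.expectation (Pi_pmf A d p) F)))
         \<le> exp (l\<^sup>2 * real (card A) * c\<^sup>2 / 2)"
  using assms(1,2,4)
proof (induction A arbitrary: F rule: finite_induct)
  case empty
  then show ?case by simp
next
  case (insert x A)
  define P where "P = Pi_pmf A d p"
  have finP: "finite (set_pmf P)" unfolding P_def
    using insert by (intro finite_set_Pi_pmf) auto
  have finx: "finite (set_pmf (p x))" using insert by auto
  have decomp: "Pi_pmf (insert x A) d p = bind_pmf (p x) (\<lambda>y. map_pmf (\<lambda>f. f(x:=y)) P)"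
    unfolding P_def using insert by (simp add: Pi_pmf_insert' map_pmf_def)
  have finm: "finite (set_pmf (map_pmf (\<lambda>f. f(x:=y)) P))" for y using finP by simp
  define G where "G y = measure_pmf.expectation P (\<lambda>f. F (f(x:=y)))" for y
  have EF: "measure_pmf.expectation (Pi_pmf (insert x A) d p) F = measure_pmf.expectation (p x) G"
    unfolding decomp G_def by (subst exp_bind_fin) (use finx finm in auto)
  define EG where "EG = measure_pmf.expectation (p x) G"
  have cG: "\<bar>G y - G y'\<bar> \<le> c" for y y'
  proof -
    have "\<bar>G y - G y'\<bar> = \<bar>measure_pmf.expectation P (\<lambda>f. F (f(x:=y)) - F (f(x:=y')))\<bar>"
      unfolding G_def using finP by (subst Bochner_Integration.integral_diff)
        (auto intro: integrable_measure_pmf_finite)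
    also have "\<dots> \<le> measure_pmf.expectation P (\<lambda>f. \<bar>F (f(x:=y)) - F (f(x:=y'))\<bar>)"
      by (rule integral_abs_bound)
    also have "\<dots> \<le> measure_pmf.expectation P (\<lambda>f. c)"
      using finP by (intro integral_mono integrable_measure_pmf_finite insert.prems(2)) auto
    also have "\<dots> = c" by simp
    finally show ?thesis .
  qed
  have IH: "measure_pmf.expectation P (\<lambda>f. exp (l * (F (f(x:=y)) - G y)))
            \<le> exp (l\<^sup>2 * real (card A) * c\<^sup>2 / 2)" for y
    unfolding G_def P_def
  proof (rule insert.IH)
    show "\<And>i. i \<in> A \<Longrightarrow> finite (set_pmf (p i))" using insert.prems by auto
    fix i and f g :: "'i \<Rightarrow> 'a" assume i: "i \<in> A" and fg: "\<And>j. j \<noteq> i \<Longrightarrow> f j = g j"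
    show "\<bar>F (f(x := y)) - F (g(x := y))\<bar> \<le> c"
      by (rule insert.prems(2)[of i]) (use i fg in auto)
  qed
  have "measure_pmf.expectation (Pi_pmf (insert x A) d p)
           (\<lambda>f. exp (l * (F f - measure_pmf.expectation (Pi_pmf (insert x A) d p) F)))
      = measure_pmf.expectation (p x) (\<lambda>y. measure_pmf.expectation P
           (\<lambda>f. exp (l * (F (f(x:=y)) - EG))))"
    unfolding EF EG_def[symmetric] unfolding decomp
    by (subst exp_bind_fin) (use finx finm in auto)
  also have "\<dots> = measure_pmf.expectation (p x) (\<lambda>y. exp (l * (G y - EG)) *
           measure_pmf.expectation P (\<lambda>f. exp (l * (F (f(x:=y)) - G y))))"
  proof (intro Bochner_Integration.integral_cong refl)
    fix y
    have "(\<lambda>f. exp (l * (F (f(x:=y)) - EG))) = (\<lambda>f. exp (l * (G y - EG)) * exp (l * (F (f(x:=y)) - G y)))"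
      by (auto simp: mult_exp_exp algebra_simps)
    then show "measure_pmf.expectation P (\<lambda>f. exp (l * (F (f(x:=y)) - EG))) =
       exp (l * (G y - EG)) * measure_pmf.expectation P (\<lambda>f. exp (l * (F (f(x:=y)) - G y)))"
      by simp
  qed
  also have "\<dots> \<le> measure_pmf.expectation (p x) (\<lambda>y. exp (l * (G y - EG)) *
           exp (l\<^sup>2 * real (card A) * c\<^sup>2 / 2))"
    using finx by (intro integral_mono integrable_measure_pmf_finite mult_left_mono IH) auto
  also have "\<dots> = measure_pmf.expectation (p x) (\<lambda>y. exp (l * (G y - EG))) *
           exp (l\<^sup>2 * real (card A) * c\<^sup>2 / 2)"
    by simp
  also have "\<dots> \<le> exp (l\<^sup>2 * ((G undefined + c) - (G undefined - c))\<^sup>2 / 8) *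
           exp (l\<^sup>2 * real (card A) * c\<^sup>2 / 2)"
    unfolding EG_def
  proof (intro mult_right_mono hoeffding_pmf finx \<open>l > 0\<close>)
    show "G y \<in> {G undefined - c..G undefined + c}" for y
      using cG[of y undefined] by (auto simp: abs_le_iff)
  qed auto
  also have "\<dots> = exp (l\<^sup>2 * real (card (insert x A)) * c\<^sup>2 / 2)"
    using insert by (simp add: mult_exp_exp power2_eq_square algebra_simps add_divide_distrib)
  finally show ?case .
qed

lemma mcdiarmid:
  fixes F :: "('i \<Rightarrow> 'a) \<Rightarrow> real"
  assumes "finite A" "A \<noteq> {}" "\<And>i. i \<in> A \<Longrightarrow> finite (set_pmf (p i))" "c > 0" "u > 0"
    "\<And>i f g. i \<in> A \<Longrightarrow> (\<And>j. j \<noteq> i \<Longrightarrow> f j = g j) \<Longrightarrow> \<bar>F f - F g\<bar> \<le> c"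
  shows "measure_pmf.prob (Pi_pmf A d p) {f. F f - measure_pmf.expectation (Pi_pmf A d p) F \<ge> u}
         \<le> exp (- (u\<^sup>2) / (2 * real (card A) * c\<^sup>2))"
proof -
  define P where "P = Pi_pmf A d p"
  define EF where "EF = measure_pmf.expectation P F"
  define n where "n = real (card A)"
  have n: "n > 0" using assms(1,2) by (simp add: n_def card_gt_0_iff)
  define l where "l = u / (n * c\<^sup>2)"
  have l: "l > 0" using n assms by (simp add: l_def)
  have finP: "finite (set_pmf P)" unfolding P_def using assms by (intro finite_set_Pi_pmf) auto
  have "measure_pmf.prob P {f. F f - EF \<ge> u} = measure_pmf.expectation P (indicator {f. F f - EF \<ge> u})"
    by simp
  also have "\<dots> \<le> measure_pmf.expectation P (\<lambda>f. exp (l * (F f - EF)) * exp (- (l * u)))"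
  proof (intro integral_mono integrable_measure_pmf_finite finP)
    fix f
    show "indicator {f. F f - EF \<ge> u} f \<le> exp (l * (F f - EF)) * exp (- (l * u))"
    proof (cases "F f - EF \<ge> u")
      case True
      then have "l * u \<le> l * (F f - EF)" using l by (intro mult_left_mono) auto
      then have "1 \<le> exp (l * (F f - EF)) * exp (- (l * u))"
        by (simp add: mult_exp_exp)
      then show ?thesis using True by simp
    qed simp
  qed
  also have "\<dots> = measure_pmf.expectation P (\<lambda>f. exp (l * (F f - EF))) * exp (- (l * u))"
    by simp
  also have "\<dots> \<le> exp (l\<^sup>2 * n * c\<^sup>2 / 2) * exp (- (l * u))"
    unfolding P_def EF_def n_def
    by (intro mult_right_mono mcdiarmid_mgf assms l) auto
  also have "\<dots> = exp (- (u\<^sup>2) / (2 * n * c\<^sup>2))"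
    using n assms by (simp add: mult_exp_exp l_def power2_eq_square field_simps)
  finally show ?thesis unfolding P_def EF_def n_def .
qed

lemma exp_pair_fin:
  fixes g :: "'a \<times> 'b \<Rightarrow> real"
  assumes "finite (set_pmf A)" "finite (set_pmf B)"
  shows "measure_pmf.expectation (pair_pmf A B) g =
         measure_pmf.expectation A (\<lambda>a. measure_pmf.expectation B (\<lambda>b. g (a, b)))"
  unfolding pair_pmf_def using assms
  by (subst exp_bind_fin) (auto intro!: Bochner_Integration.integral_cong simp: exp_bind_fin)

lemma exp_swap_fin:
  fixes g :: "'a \<Rightarrow> 'b \<Rightarrow> real"
  assumes "finite (set_pmf A)" "finite (set_pmf B)"
  shows "measure_pmf.expectation A (\<lambda>a. measure_pmf.expectation B (\<lambda>b. g a b)) =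
         measure_pmf.expectation B (\<lambda>b. measure_pmf.expectation A (\<lambda>a. g a b))"
proof -
  have "measure_pmf.expectation A (\<lambda>a. measure_pmf.expectation B (\<lambda>b. g a b)) =
        (\<Sum>a\<in>set_pmf A. pmf A a *\<^sub>R (\<Sum>b\<in>set_pmf B. pmf B b *\<^sub>R g a b))"
    using assms by (subst integral_measure_pmf[where A="set_pmf A"])
      (auto intro!: sum.cong simp: integral_measure_pmf[where A="set_pmf B"])
  also have "\<dots> = (\<Sum>b\<in>set_pmf B. pmf B b *\<^sub>R (\<Sum>a\<in>set_pmf A. pmf A a *\<^sub>R g a b))"
    by (simp add: sum_distrib_left sum.swap[of _ "set_pmf A"] mult.left_commute)
  also have "\<dots> = measure_pmf.expectation B (\<lambda>b. measure_pmf.expectation A (\<lambda>a. g a b))"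
    using assms by (subst integral_measure_pmf[where A="set_pmf B"])
      (auto intro!: sum.cong simp: integral_measure_pmf[where A="set_pmf A"])
  finally show ?thesis .
qed

lemma exp_Pi_coord:
  fixes g :: "'a \<Rightarrow> real"
  assumes "finite A" "j \<in> A"
  shows "measure_pmf.expectation (Pi_pmf A d p) (\<lambda>X. g (X j)) = measure_pmf.expectation (p j) g"
proof -
  have "measure_pmf.expectation (Pi_pmf A d p) (\<lambda>X. g (X j)) =
        measure_pmf.expectation (map_pmf (\<lambda>X. X j) (Pi_pmf A d p)) g" by simp
  also have "map_pmf (\<lambda>X. X j) (Pi_pmf A d p) = p j"
    using assms by (simp add: Pi_pmf_component)
  finally show ?thesis .
qed

definition swp :: "(nat \<Rightarrow> real) \<Rightarrow> (nat \<Rightarrow> 'z) \<times> (nat \<Rightarrow> 'z) \<Rightarrow> (nat \<Rightarrow> 'z) \<times> (nat \<Rightarrow> 'z)" where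
  "swp e XY = ((\<lambda>j. if e j = 1 then fst XY j else snd XY j), (\<lambda>j. if e j = 1 then snd XY j else fst XY j))"

lemma swp_swp: "swp e (swp e XY) = XY"
  by (cases XY) (auto simp: swp_def fun_eq_iff)

lemma swp_inv:
  assumes "finite A"
  shows "map_pmf (swp e) (pair_pmf (Pi_pmf A d (\<lambda>_. D)) (Pi_pmf A d (\<lambda>_. D)))
         = pair_pmf (Pi_pmf A d (\<lambda>_. D)) (Pi_pmf A d (\<lambda>_. D))"
proof (rule pmf_eqI)
  fix ab :: "(nat \<Rightarrow> 'a) \<times> (nat \<Rightarrow> 'a)"
  obtain a b where ab: "ab = (a, b)" by (cases ab)
  have inj: "inj (swp e)" by (metis injI swp_swp)
  have "pmf (map_pmf (swp e) (pair_pmf (Pi_pmf A d (\<lambda>_. D)) (Pi_pmf A d (\<lambda>_. D)))) ab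
      = pmf (pair_pmf (Pi_pmf A d (\<lambda>_. D)) (Pi_pmf A d (\<lambda>_. D))) (swp e ab)"
    by (metis pmf_map_inj'[OF inj] swp_swp)
  also have "\<dots> = pmf (pair_pmf (Pi_pmf A d (\<lambda>_. D)) (Pi_pmf A d (\<lambda>_. D))) ab"
  proof -
    define a' where "a' = (\<lambda>j. if e j = 1 then a j else b j)"
    define b' where "b' = (\<lambda>j. if e j = 1 then b j else a j)"
    have sw: "swp e ab = (a', b')" unfolding ab swp_def a'_def b'_def by auto
    have c1: "((\<forall>x. x \<notin> A \<longrightarrow> a' x = d) \<and> (\<forall>x. x \<notin> A \<longrightarrow> b' x = d)) =
              ((\<forall>x. x \<notin> A \<longrightarrow> a x = d) \<and> (\<forall>x. x \<notin> A \<longrightarrow> b x = d))"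
      by (auto simp: a'_def b'_def)
    have c2: "(\<Prod>x\<in>A. pmf D (a' x)) * (\<Prod>x\<in>A. pmf D (b' x)) =
              (\<Prod>x\<in>A. pmf D (a x)) * (\<Prod>x\<in>A. pmf D (b x))"
      by (simp add: prod.distrib[symmetric] a'_def b'_def) (intro prod.cong; simp add: mult.commute)
    show ?thesis unfolding sw unfolding ab pmf_pair using assms
      by (subst (1 2 3 4) pmf_Pi) (use c1 c2 in auto)
  qed
  finally show "pmf (map_pmf (swp e) (pair_pmf (Pi_pmf A d (\<lambda>_. D)) (Pi_pmf A d (\<lambda>_. D)))) ab
      = pmf (pair_pmf (Pi_pmf A d (\<lambda>_. D)) (Pi_pmf A d (\<lambda>_. D))) ab" .
qed

lemma set_pmf_pm1: "set_pmf (pmf_of_set {-1, 1::real}) = {-1, 1}"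
  by simp

lemma map_neg_pm1: "map_pmf uminus (pmf_of_set {-1, 1::real}) = pmf_of_set {-1, 1}"
  by (subst map_pmf_of_set_inj) (auto simp: inj_on_def insert_commute)

lemma map_neg_EPS:
  fixes s :: nat
  shows "map_pmf (\<lambda>e j. - e j) (Pi_pmf {..<s} (0::real) (\<lambda>_. pmf_of_set {-1, 1::real}))
   = Pi_pmf {..<s} (0::real) (\<lambda>_. pmf_of_set {-1, 1::real})"
proof -
  have "Pi_pmf {..<s} (-0::real) (\<lambda>_. map_pmf uminus (pmf_of_set {-1, 1::real})) =
        map_pmf (\<lambda>h. uminus \<circ> h) (Pi_pmf {..<s} (0::real) (\<lambda>_. pmf_of_set {-1, 1::real}))"
    by (rule Pi_pmf_map) auto
  then show ?thesis by (simp add: map_neg_pm1 o_def)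
qed

lemma finite_EPS: "finite (set_pmf (Pi_pmf {..<(s::nat)} (0::real) (\<lambda>_. pmf_of_set {-1, 1::real})))"
  by (intro finite_set_Pi_pmf) auto

lemma EPS_vals: "e \<in> set_pmf (Pi_pmf {..<(s::nat)} (0::real) (\<lambda>_. pmf_of_set {-1, 1::real})) \<Longrightarrow> j < s \<Longrightarrow> e j = -1 \<or> e j = 1"
  by (auto simp: set_Pi_pmf PiE_dflt_def)


context
  fixes f :: "'h \<Rightarrow> 'z \<Rightarrow> real" and H :: "'h set" and D :: "'z pmf" and s :: nat and B :: real and d :: 'z
  assumes H: "H \<noteq> {}" and finD: "finite (set_pmf D)" and s: "s \<ge> 1"
    and bnd: "\<And>h w. h \<in> H \<Longrightarrow> \<bar>f h w\<bar> \<le> B"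
begin

lemma finP: "finite (set_pmf (Pi_pmf {..<s} d (\<lambda>_. D)))"
  using finD by (intro finite_set_Pi_pmf) auto

lemma bnd_S: "h \<in> H \<Longrightarrow> \<bar>(1 / real s) * (\<Sum>j<s. e j * f h (w j))\<bar> \<le> (1 / real s) * (\<Sum>j<s. \<bar>e j\<bar> * B)"
proof -
  assume h: "h \<in> H"
  have "\<bar>\<Sum>j<s. e j * f h (w j)\<bar> \<le> (\<Sum>j<s. \<bar>e j * f h (w j)\<bar>)" by (rule sum_abs)
  also have "\<dots> \<le> (\<Sum>j<s. \<bar>e j\<bar> * B)"
    by (intro sum_mono) (simp add: abs_mult bnd h mult_left_mono)
  finally show ?thesis by (simp add: abs_mult divide_right_mono)
qed

lemma bdd_S: "bdd_above ((\<lambda>h. (1 / real s) * (\<Sum>j<s. e j * f h (w j))) ` H)"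
  by (rule bdd_aboveI2[where M="(1 / real s) * (\<Sum>j<s. \<bar>e j\<bar> * B)"]) (use abs_le_D1[OF bnd_S] in auto)


lemma bdd_M: "bdd_above ((\<lambda>h. (\<Sum>j<s. f h (X' j)) / real s - (\<Sum>j<s. f h (X j)) / real s) ` H)"
proof (rule bdd_aboveI2[where M="2 * B"])
  fix h assume h: "h \<in> H"
  have a: "\<bar>(\<Sum>j<s. f h (Y j)) / real s\<bar> \<le> B" for Y
    using bnd_S[OF h, of "\<lambda>_. 1" Y] s by simp
  have "\<bar>(\<Sum>j<s. f h (X' j)) / real s\<bar> \<le> B" "\<bar>(\<Sum>j<s. f h (X j)) / real s\<bar> \<le> B"
    by (rule a)+
  then show "(\<Sum>j<s. f h (X' j)) / real s - (\<Sum>j<s. f h (X j)) / real s \<le> 2 * B" by linarith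
qed

lemma ED_eq: "measure_pmf.expectation D (f h) =
  measure_pmf.expectation (Pi_pmf {..<s} d (\<lambda>_. D)) (\<lambda>X. (\<Sum>j<s. f h (X j)) / real s)"
proof -
  have "measure_pmf.expectation (Pi_pmf {..<s} d (\<lambda>_. D)) (\<lambda>X. (\<Sum>j<s. f h (X j)) / real s)
      = (\<Sum>j<s. measure_pmf.expectation (Pi_pmf {..<s} d (\<lambda>_. D)) (\<lambda>X. f h (X j))) / real s"
  proof -
    have "measure_pmf.expectation (Pi_pmf {..<s} d (\<lambda>_. D)) (\<lambda>X. (\<Sum>j<s. f h (X j)) / real s)
        = measure_pmf.expectation (Pi_pmf {..<s} d (\<lambda>_. D)) (\<lambda>X. (\<Sum>j<s. f h (X j))) / real s"
      by (rule integral_divide_zero)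
    also have "measure_pmf.expectation (Pi_pmf {..<s} d (\<lambda>_. D)) (\<lambda>X. (\<Sum>j<s. f h (X j)))
        = (\<Sum>j<s. measure_pmf.expectation (Pi_pmf {..<s} d (\<lambda>_. D)) (\<lambda>X. f h (X j)))"
      by (rule Bochner_Integration.integral_sum) (auto intro: integrable_measure_pmf_finite finP)
    finally show ?thesis .
  qed
  also have "\<dots> = (\<Sum>j<s. measure_pmf.expectation D (f h)) / real s"
    by (intro arg_cong2[where f="(/)"] sum.cong refl) (subst exp_Pi_coord, auto)
  also have "\<dots> = measure_pmf.expectation D (f h)" using s by simp
  finally show ?thesis by simp
qed

lemma symmetrization:
  "measure_pmf.expectation (Pi_pmf {..<s} d (\<lambda>_. D))
     (\<lambda>X. SUP h\<in>H. measure_pmf.expectation D (f h) - (\<Sum>j<s. f h (X j)) / real s)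
   \<le> 2 * measure_pmf.expectation
       (pair_pmf (Pi_pmf {..<s} d (\<lambda>_. D)) (Pi_pmf {..<s} 0 (\<lambda>_. pmf_of_set {-1, 1::real})))
       (\<lambda>(w, e). SUP h\<in>H. (1 / real s) * (\<Sum>j<s. e j * f h (w j)))"
proof -
  define P where "P = Pi_pmf {..<s} d (\<lambda>_. D)"
  define EPS where "EPS = Pi_pmf {..<s} (0::real) (\<lambda>_. pmf_of_set {-1, 1::real})"
  define M where "M h X = (\<Sum>j<s. f h (X j)) / real s" for h X
  define Psi where "Psi p = (SUP h\<in>H. M h (snd p) - M h (fst p))" for p
  define Phi where "Phi e p = (SUP h\<in>H. (1 / real s) * (\<Sum>j<s. e j * (f h (snd p j) - f h (fst p j))))" for e p
  define S where "S w e = (SUP h\<in>H. (1 / real s) * (\<Sum>j<s. e j * f h (w j)))" for w e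
  have fP: "finite (set_pmf P)" using finP by (simp add: P_def)
  have fE: "finite (set_pmf EPS)" using finite_EPS by (simp add: EPS_def)
  have fPP: "finite (set_pmf (pair_pmf P P))" using fP by simp
  have int: "integrable (measure_pmf Q) g" if "finite (set_pmf Q)" for Q and g :: "_ \<Rightarrow> real"
    using that by (rule integrable_measure_pmf_finite)
  have step2: "(SUP h\<in>H. measure_pmf.expectation D (f h) - M h X)
       \<le> measure_pmf.expectation P (\<lambda>X'. Psi (X, X'))" for X
  proof (rule cSUP_least[OF H])
    fix h assume h: "h \<in> H"
    have "measure_pmf.expectation D (f h) - M h X = measure_pmf.expectation P (\<lambda>X'. M h X' - M h X)"
      using ED_eq[of h] fP unfolding P_def M_def
      by (subst Bochner_Integration.integral_diff) (auto intro: integrable_measure_pmf_finite)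
    also have "\<dots> \<le> measure_pmf.expectation P (\<lambda>X'. Psi (X, X'))"
      unfolding Psi_def M_def using fP
    proof (intro integral_mono int)
      fix X' show "(\<Sum>j<s. f h (X' j)) / real s - (\<Sum>j<s. f h (X j)) / real s
        \<le> (SUP h\<in>H. (\<Sum>j<s. f h (snd (X, X') j)) / real s - (\<Sum>j<s. f h (fst (X, X') j)) / real s)"
        using cSUP_upper[OF h bdd_M[of X' X]] by simp
    qed auto
    finally show "measure_pmf.expectation D (f h) - M h X \<le> measure_pmf.expectation P (\<lambda>X'. Psi (X, X'))" .
  qed
  have "measure_pmf.expectation P (\<lambda>X. SUP h\<in>H. measure_pmf.expectation D (f h) - M h X)
        \<le> measure_pmf.expectation P (\<lambda>X. measure_pmf.expectation P (\<lambda>X'. Psi (X, X')))"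
    by (intro integral_mono int fP step2)
  also have "\<dots> = measure_pmf.expectation (pair_pmf P P) Psi"
    by (rule exp_pair_fin[symmetric]) (use fP in auto)
  also have "\<dots> = measure_pmf.expectation EPS (\<lambda>e. measure_pmf.expectation (pair_pmf P P) (Phi e))"
  proof -
    have "measure_pmf.expectation (pair_pmf P P) (Phi e) = measure_pmf.expectation (pair_pmf P P) Psi"
      if e: "e \<in> set_pmf EPS" for e
    proof -
      have "measure_pmf.expectation (pair_pmf P P) Psi
          = measure_pmf.expectation (map_pmf (swp e) (pair_pmf P P)) Psi"
        unfolding P_def by (subst swp_inv) auto
      also have "\<dots> = measure_pmf.expectation (pair_pmf P P) (\<lambda>p. Psi (swp e p))" by simp
      also have "(\<lambda>p. Psi (swp e p)) = Phi e"
      proof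
        fix p
        have "M h (snd (swp e p)) - M h (fst (swp e p)) =
              (1 / real s) * (\<Sum>j<s. e j * (f h (snd p j) - f h (fst p j)))" for h
        proof -
          have "M h (snd (swp e p)) - M h (fst (swp e p)) =
                (\<Sum>j<s. f h (snd (swp e p) j) - f h (fst (swp e p) j)) / real s"
            unfolding M_def by (simp add: sum_subtractf diff_divide_distrib)
          also have "(\<Sum>j<s. f h (snd (swp e p) j) - f h (fst (swp e p) j)) =
                     (\<Sum>j<s. e j * (f h (snd p j) - f h (fst p j)))"
          proof (rule sum.cong[OF refl])
            fix j assume "j \<in> {..<s}"
            then have "e j = -1 \<or> e j = 1" using EPS_vals e unfolding EPS_def by auto
            then show "f h (snd (swp e p) j) - f h (fst (swp e p) j) = e j * (f h (snd p j) - f h (fst p j))"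
              by (auto simp: swp_def)
          qed
          finally show ?thesis by simp
        qed
        then show "Psi (swp e p) = Phi e p" unfolding Psi_def Phi_def by simp
      qed
      finally show ?thesis by simp
    qed
    then have "measure_pmf.expectation EPS (\<lambda>e. measure_pmf.expectation (pair_pmf P P) (Phi e))
             = measure_pmf.expectation EPS (\<lambda>e. measure_pmf.expectation (pair_pmf P P) Psi)"
      by (intro integral_cong_AE) (auto simp: AE_measure_pmf_iff)
    then show ?thesis by simp
  qed
  also have "\<dots> = measure_pmf.expectation (pair_pmf P P) (\<lambda>p. measure_pmf.expectation EPS (\<lambda>e. Phi e p))"
    by (rule exp_swap_fin) (use fE fPP in auto)
  also have "\<dots> \<le> measure_pmf.expectation (pair_pmf P P)
        (\<lambda>p. measure_pmf.expectation EPS (\<lambda>e. S (snd p) e) + measure_pmf.expectation EPS (\<lambda>e. S (fst p) (\<lambda>j. - e j)))"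
  proof (intro integral_mono int fPP)
    fix p
    have "Phi e p \<le> S (snd p) e + S (fst p) (\<lambda>j. - e j)" for e
      unfolding Phi_def
    proof (rule cSUP_least[OF H])
      fix h assume h: "h \<in> H"
      have "(1 / real s) * (\<Sum>j<s. e j * (f h (snd p j) - f h (fst p j))) =
            (1 / real s) * (\<Sum>j<s. e j * f h (snd p j)) + (1 / real s) * (\<Sum>j<s. (- e j) * f h (fst p j))"
        by (simp add: sum_subtractf right_diff_distrib ring_distribs sum_negf)
      also have "\<dots> \<le> S (snd p) e + S (fst p) (\<lambda>j. - e j)"
        unfolding S_def by (intro add_mono cSUP_upper[OF h] bdd_S)
      finally show "(1 / real s) * (\<Sum>j<s. e j * (f h (snd p j) - f h (fst p j))) \<le> S (snd p) e + S (fst p) (\<lambda>j. - e j)" .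
    qed
    then have "measure_pmf.expectation EPS (\<lambda>e. Phi e p) \<le>
               measure_pmf.expectation EPS (\<lambda>e. S (snd p) e + S (fst p) (\<lambda>j. - e j))"
      by (intro integral_mono int fE)
    also have "\<dots> = measure_pmf.expectation EPS (\<lambda>e. S (snd p) e) + measure_pmf.expectation EPS (\<lambda>e. S (fst p) (\<lambda>j. - e j))"
      by (rule Bochner_Integration.integral_add) (use fE in \<open>auto intro: int\<close>)
    finally show "measure_pmf.expectation EPS (\<lambda>e. Phi e p) \<le> \<dots>" .
  qed
  also have "\<dots> = measure_pmf.expectation (pair_pmf P P)
        (\<lambda>p. measure_pmf.expectation EPS (\<lambda>e. S (snd p) e) + measure_pmf.expectation EPS (\<lambda>e. S (fst p) e))"
  proof -
    have "measure_pmf.expectation EPS (\<lambda>e. S w (\<lambda>j. - e j)) = measure_pmf.expectation EPS (\<lambda>e. S w e)" for w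
    proof -
      have "measure_pmf.expectation EPS (\<lambda>e. S w (\<lambda>j. - e j)) =
            measure_pmf.expectation (map_pmf (\<lambda>e j. - e j) EPS) (\<lambda>e. S w e)" by simp
      also have "map_pmf (\<lambda>e j. - e j) EPS = EPS" unfolding EPS_def by (rule map_neg_EPS)
      finally show ?thesis .
    qed
    then show ?thesis by simp
  qed
  also have "\<dots> = 2 * measure_pmf.expectation P (\<lambda>w. measure_pmf.expectation EPS (\<lambda>e. S w e))"
  proof -
    have "measure_pmf.expectation (pair_pmf P P)
        (\<lambda>p. measure_pmf.expectation EPS (\<lambda>e. S (snd p) e) + measure_pmf.expectation EPS (\<lambda>e. S (fst p) e))
       = measure_pmf.expectation (pair_pmf P P) (\<lambda>p. measure_pmf.expectation EPS (\<lambda>e. S (snd p) e))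
         + measure_pmf.expectation (pair_pmf P P) (\<lambda>p. measure_pmf.expectation EPS (\<lambda>e. S (fst p) e))"
      by (rule Bochner_Integration.integral_add; rule int; rule fPP)
    also have "\<dots> = 2 * measure_pmf.expectation P (\<lambda>w. measure_pmf.expectation EPS (\<lambda>e. S w e))"
      using expectation_pair_pmf_fst[where f="\<lambda>w. measure_pmf.expectation EPS (S w)" and p=P and q=P]
            expectation_pair_pmf_snd[where f="\<lambda>w. measure_pmf.expectation EPS (S w)" and p=P and q=P] by simp
    finally show ?thesis .
  qed
  also have "\<dots> = 2 * measure_pmf.expectation (pair_pmf P EPS) (\<lambda>(w, e). S w e)"
    by (subst exp_pair_fin) (use fP fE in auto)
  finally show ?thesis unfolding P_def EPS_def S_def M_def .
qed

end

lemma rad_point: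
  "rademacher l H (return_pmf b) z 1 =
   ((SUP h\<in>H. - l h z b) + (SUP h\<in>H. l h z b)) / 2"
proof -
  have e1: "{..<1::nat} = {0}" by auto
  have "rademacher l H (return_pmf b) z 1 =
        measure_pmf.expectation (pmf_of_set {-1, 1::real}) (\<lambda>a. SUP h\<in>H. a * l h z b)"
    unfolding rademacher_def e1
    by (simp add: Pi_pmf_singleton pair_return_pmf1)
  also have "\<dots> = ((SUP h\<in>H. - l h z b) + (SUP h\<in>H. l h z b)) / 2"
    by (subst integral_pmf_of_set) auto
  finally show ?thesis .
qed

lemma osc:
  assumes "h \<in> H" "h' \<in> H" "\<And>g a b. g \<in> H \<Longrightarrow> 0 \<le> l g a b \<and> l g a b \<le> Bd"
    "rademacher l H (return_pmf b) z 1 \<le> K"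
  shows "l h z b - l h' z b \<le> 2 * K"
proof -
  have b1: "bdd_above ((\<lambda>g. l g z b) ` H)"
    using assms(3) by (intro bdd_aboveI2[where M=Bd]) auto
  have b2: "bdd_above ((\<lambda>g. - l g z b) ` H)"
    using assms(3) by (intro bdd_aboveI2[where M=0]) auto
  have "l h z b \<le> (SUP g\<in>H. l g z b)" by (rule cSUP_upper[OF assms(1) b1])
  moreover have "- l h' z b \<le> (SUP g\<in>H. - l g z b)" by (rule cSUP_upper[OF assms(2) b2])
  moreover have "(SUP g\<in>H. - l g z b) + (SUP g\<in>H. l g z b) \<le> 2 * K"
    using assms(4) unfolding rad_point by simp
  ultimately show ?thesis by linarith
qed

lemma pmf_map_bern:
  assumes "(j::nat) \<noteq> k" "k \<ge> 1"
  shows "pmf (map_pmf (\<lambda>b. if b then k else j) (bernoulli_pmf (1 / real k))) i =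
         (if i = k then 1 / real k else 0) + (if i = j then 1 - 1 / real k else 0)"
proof -
  have p: "0 \<le> 1 / real k" "1 / real k \<le> 1" using assms by auto
  have pre: "(\<lambda>b. if b then k else j) -` {i} = (if i = k then {True} else {}) \<union> (if i = j then {False} else {})"
    using assms(1) by (auto split: if_splits)
  show ?thesis
    unfolding pmf_map pre using assms(1) p
    by (auto simp: measure_pmf_single)
qed

lemma index_mix:
  assumes "k \<ge> 2"
  shows "bind_pmf (pmf_of_set {1..k-1}) (\<lambda>j. map_pmf (\<lambda>b. if b then k else j) (bernoulli_pmf (1 / real k)))
         = pmf_of_set {1..k}"
proof (rule pmf_eqI)
  fix i
  have ne: "{1..k-1} \<noteq> {}" using assms by auto
  have "pmf (bind_pmf (pmf_of_set {1..k-1}) (\<lambda>j. map_pmf (\<lambda>b. if b then k else j) (bernoulli_pmf (1 / real k)))) i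
      = (\<Sum>j\<in>{1..k-1}. pmf (map_pmf (\<lambda>b. if b then k else j) (bernoulli_pmf (1 / real k))) i) / real (k - 1)"
    unfolding pmf_bind using ne by (subst integral_pmf_of_set) auto
  also have "\<dots> = (\<Sum>j\<in>{1..k-1}. (if i = k then 1 / real k else 0) + (if i = j then 1 - 1 / real k else 0)) / real (k - 1)"
    using assms by (intro arg_cong2[where f="(/)"] sum.cong refl pmf_map_bern) auto
  also have "\<dots> = pmf (pmf_of_set {1..k}) i"
  proof -
    have k1: "real (k - 1) = real k - 1" using assms by auto
    have kk: "real k - 1 > 0" using assms by auto
    have "(\<Sum>j\<in>{1..k-1}. (if i = k then 1 / real k else 0) + (if i = j then 1 - 1 / real k else 0))
          = real (k - 1) * (if i = k then 1 / real k else 0) + (if i \<in> {1..k-1} then 1 - 1 / real k else 0)"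
      by (simp add: sum.distrib)
    moreover have "pmf (pmf_of_set {1..k}) i = (if i \<in> {1..k} then 1 / real k else 0)"
      using assms by (auto simp: pmf_of_set)
    moreover have "i \<in> {1..k} \<longleftrightarrow> i = k \<or> i \<in> {1..k-1}" using assms by auto
    moreover have "\<not> (i = k \<and> i \<in> {1..k-1})" using assms by auto
    ultimately show ?thesis using kk unfolding k1 by (auto simp: field_simps)
  qed
  finally show "pmf (bind_pmf (pmf_of_set {1..k-1}) (\<lambda>j. map_pmf (\<lambda>b. if b then k else j) (bernoulli_pmf (1 / real k)))) i
      = pmf (pmf_of_set {1..k}) i" .
qed

definition U :: "(nat \<Rightarrow> 'z) \<Rightarrow> nat \<Rightarrow> 'z pmf" where
  "U z m = map_pmf z (pmf_of_set {1..m})"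

lemma U_mix:
  assumes "k \<ge> 2"
  shows "bind_pmf (U z (k-1)) (\<lambda>a. map_pmf (\<lambda>b. if b then z k else a) (bernoulli_pmf (1 / real k))) = U z k"
proof -
  have "bind_pmf (U z (k-1)) (\<lambda>a. map_pmf (\<lambda>b. if b then z k else a) (bernoulli_pmf (1 / real k)))
      = bind_pmf (pmf_of_set {1..k-1}) (\<lambda>j. map_pmf z (map_pmf (\<lambda>b. if b then k else j) (bernoulli_pmf (1 / real k))))"
    unfolding U_def bind_map_pmf map_pmf_comp by (intro bind_pmf_cong refl map_pmf_cong) auto
  also have "\<dots> = map_pmf z (bind_pmf (pmf_of_set {1..k-1}) (\<lambda>j. map_pmf (\<lambda>b. if b then k else j) (bernoulli_pmf (1 / real k))))"
    by (simp add: map_bind_pmf)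
  also have "\<dots> = U z k" unfolding U_def index_mix[OF assms] ..
  finally show ?thesis .
qed

lemma traj_stable:
  "t \<le> k \<Longrightarrow> map_pmf (\<lambda>Bs. Bs t) (rsx_traj s z k) = map_pmf (\<lambda>Bs. Bs t) (rsx_traj s z t)"
proof (induction k)
  case 0
  then show ?case by simp
next
  case (Suc k)
  show ?case
  proof (cases "t = Suc k")
    case False
    then have tk: "t \<le> k" using Suc.prems by auto
    have "map_pmf (\<lambda>Bs. Bs t) (rsx_traj s z (Suc k)) = map_pmf (\<lambda>Bs. Bs t) (rsx_traj s z k)"
    proof (cases "k = 0")
      case True
      then show ?thesis by simp
    next
      case k0: False
      have "map_pmf (\<lambda>Bs. Bs t) (rsx_traj s z (Suc k)) =
            bind_pmf (rsx_traj s z k) (\<lambda>Bs. return_pmf (Bs t))"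
        using k0 False by (simp add: map_bind_pmf map_pmf_comp)
      also have "\<dots> = map_pmf (\<lambda>Bs. Bs t) (rsx_traj s z k)" by (simp add: map_pmf_def)
      finally show ?thesis .
    qed
    then show ?thesis using Suc.IH[OF tk] by simp
  qed simp
qed

lemma traj_next:
  "k \<ge> 1 \<Longrightarrow> map_pmf (\<lambda>Bs. Bs (Suc k)) (rsx_traj s z (Suc k)) =
     bind_pmf (map_pmf (\<lambda>Bs. Bs k) (rsx_traj s z k)) (rsx_step s k (z k))"
  by (simp add: map_bind_pmf map_pmf_comp bind_map_pmf)

definition mg :: "nat \<Rightarrow> (nat \<Rightarrow> 'z) \<Rightarrow> nat \<Rightarrow> 'z list pmf" where
  "mg s z k = map_pmf (\<lambda>Bs. Bs k) (rsx_traj s z k)"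

definition iid :: "nat \<Rightarrow> (nat \<Rightarrow> 'z) \<Rightarrow> nat \<Rightarrow> 'z list pmf" where
  "iid s z m = map_pmf (\<lambda>f. map f [0..<s]) (Pi_pmf {..<s} undefined (\<lambda>_. U z m))"

lemma mg_next: "k \<ge> 1 \<Longrightarrow> mg s z (Suc k) = bind_pmf (mg s z k) (rsx_step s k (z k))"
  unfolding mg_def by (rule traj_next)

lemma mg_small: "1 \<le> k \<Longrightarrow> k \<le> s + 1 \<Longrightarrow> mg s z k = return_pmf (map z [1..<k])"
proof (induction k)
  case 0
  then show ?case by simp
next
  case (Suc k)
  show ?case
  proof (cases "k = 0")
    case True
    then show ?thesis by (simp add: mg_def)
  next
    case False
    then have k1: "k \<ge> 1" by simp
    have "mg s z (Suc k) = rsx_step s k (z k) (map z [1..<k])"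
      using Suc.IH[OF k1] Suc.prems by (simp add: mg_next[OF k1] bind_return_pmf)
    also have "\<dots> = return_pmf (map z [1..<k] @ [z k])"
      using Suc.prems k1 by (simp add: rsx_step_def)
    also have "map z [1..<k] @ [z k] = map z [1..<Suc k]" using k1 by simp
    finally show ?thesis .
  qed
qed

lemma U_shift: "map_pmf (\<lambda>i. (map z [1..<s+1] @ [z (s+1)]) ! i) (pmf_of_set {..<s+1}) = U z (s+1)"
proof -
  have "map_pmf (\<lambda>i. (map z [1..<s+1] @ [z (s+1)]) ! i) (pmf_of_set {..<s+1}) =
        map_pmf (\<lambda>i. z (Suc i)) (pmf_of_set {..<s+1})"
  proof (intro map_pmf_cong refl)
    fix i assume "i \<in> set_pmf (pmf_of_set {..<s + 1})"
    then have i: "i < s + 1" by (subst (asm) set_pmf_of_set) auto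
    have eq: "map z [1..<s+1] @ [z (s+1)] = map z [1..<s+2]" by simp
    have il: "i < length [1..<s+2]" using i by simp
    show "(map z [1..<s+1] @ [z (s+1)]) ! i = z (Suc i)"
      unfolding eq nth_map[OF il] using i by (subst nth_upt) auto
  qed
  also have "\<dots> = map_pmf z (map_pmf Suc (pmf_of_set {..<s+1}))" by (simp add: map_pmf_comp)
  also have "map_pmf Suc (pmf_of_set {..<s+1}) = pmf_of_set (Suc ` {..<s+1})"
    by (rule map_pmf_of_set_inj) auto
  also have "Suc ` {..<s+1} = {1..s+1}" by (rule image_Suc_lessThan)
  finally show ?thesis unfolding U_def .
qed

lemma mg_s2: "s \<ge> 1 \<Longrightarrow> mg s z (s+2) = iid s z (s+1)"
proof -
  assume s: "s \<ge> 1"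
  have st: "rsx_step s (s+1) (z (s+1)) L = map_pmf (\<lambda>f. map f [0..<s])
      (Pi_pmf {..<s} undefined (\<lambda>_. map_pmf (\<lambda>i. (L @ [z (s+1)]) ! i) (pmf_of_set {..<s+1})))"
    if "length L = s" for L
    using that by (simp add: rsx_step_def)
  have "mg s z (Suc (s+1)) = rsx_step s (s+1) (z (s+1)) (map z [1..<s+1])"
    by (simp add: mg_next mg_small bind_return_pmf)
  also have "\<dots> = map_pmf (\<lambda>f. map f [0..<s]) (Pi_pmf {..<s} undefined (\<lambda>_. U z (s+1)))"
  proof -
    have len: "length (map z [1..<s+1]) = s" by simp
    show ?thesis unfolding st[OF len] U_shift ..
  qed
  finally show ?thesis by (simp add: iid_def)
qed

lemma mg_large: "s \<ge> 1 \<Longrightarrow> k \<ge> s + 2 \<Longrightarrow> mg s z k = iid s z (k - 1)"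
proof (induction k)
  case 0
  then show ?case by simp
next
  case (Suc k)
  show ?case
  proof (cases "k = s + 1")
    case True
    then show ?thesis using mg_s2[OF Suc.prems(1)] by simp
  next
    case False
    then have ks: "k \<ge> s + 2" using Suc.prems by simp
    have k1: "k \<ge> 1" "k \<ge> 2" using ks Suc.prems by auto
    define qq where "qq a = map_pmf (\<lambda>b. if b then z k else a) (bernoulli_pmf (1 / real k))" for a
    have "mg s z (Suc k) = bind_pmf (Pi_pmf {..<s} undefined (\<lambda>_. U z (k-1)))
              (\<lambda>f. rsx_step s k (z k) (map f [0..<s]))"
      unfolding mg_next[OF k1(1)] Suc.IH[OF Suc.prems(1) ks] iid_def by (simp add: bind_map_pmf)
    also have "\<dots> = bind_pmf (Pi_pmf {..<s} undefined (\<lambda>_. U z (k-1)))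
              (\<lambda>f. map_pmf (\<lambda>g. map g [0..<s]) (Pi_pmf {..<s} undefined (\<lambda>i. qq (f i))))"
    proof (intro bind_pmf_cong refl)
      fix f
      have "rsx_step s k (z k) (map f [0..<s]) = map_pmf (\<lambda>g. map g [0..<s])
          (Pi_pmf {..<s} undefined (\<lambda>i. map_pmf (\<lambda>b. if b then z k else map f [0..<s] ! i) (bernoulli_pmf (1 / real k))))"
        using False ks by (simp add: rsx_step_def)
      also have "Pi_pmf {..<s} undefined (\<lambda>i. map_pmf (\<lambda>b. if b then z k else map f [0..<s] ! i) (bernoulli_pmf (1 / real k)))
               = Pi_pmf {..<s} undefined (\<lambda>i. qq (f i))"
      proof (intro Pi_pmf_cong refl)
        fix i assume "i \<in> {..<s}"
        then have "map f [0..<s] ! i = f i" by simp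
        then have eq: "(\<lambda>b. if b then z k else map f [0..<s] ! i) = (\<lambda>b. if b then z k else f i)" by (intro ext) simp
        show "map_pmf (\<lambda>b. if b then z k else map f [0..<s] ! i) (bernoulli_pmf (1 / real k)) = qq (f i)"
          unfolding eq qq_def ..
      qed
      finally show "rsx_step s k (z k) (map f [0..<s]) = map_pmf (\<lambda>g. map g [0..<s]) (Pi_pmf {..<s} undefined (\<lambda>i. qq (f i)))" .
    qed
    also have "\<dots> = map_pmf (\<lambda>g. map g [0..<s]) (bind_pmf (Pi_pmf {..<s} undefined (\<lambda>_. U z (k-1)))
              (\<lambda>f. Pi_pmf {..<s} undefined (\<lambda>i. qq (f i))))"
      by (simp add: map_bind_pmf)
    also have "bind_pmf (Pi_pmf {..<s} undefined (\<lambda>_. U z (k-1))) (\<lambda>f. Pi_pmf {..<s} undefined (\<lambda>i. qq (f i)))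
             = Pi_pmf {..<s} undefined (\<lambda>i. bind_pmf (U z (k-1)) qq)"
      by (rule Pi_pmf_bind[where d'=undefined and p="\<lambda>_. U z (k-1)" and q="\<lambda>_ a. qq a", symmetric]) auto
    also have "(\<lambda>i::nat. bind_pmf (U z (k-1)) qq) = (\<lambda>_. U z k)"
      unfolding qq_def by (rule ext) (rule U_mix[OF k1(2)])
    finally show ?thesis by (simp add: iid_def)
  qed
qed

lemma marginal:
  assumes "s \<ge> 1" "1 \<le> t" "t \<le> n"
  shows "map_pmf (\<lambda>Bs. Bs t) (rsx_traj s z n) =
         (if t \<le> s + 1 then return_pmf (map z [1..<t]) else iid s z (t - 1))"
  using traj_stable[OF assms(3), of s z] mg_small[of t s z] mg_large[of s t z] assms
  unfolding mg_def by auto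

lemma SUP_minus_const:
  fixes f :: "'a \<Rightarrow> real"
  assumes "H \<noteq> {}" "bdd_above (f ` H)"
  shows "(SUP h\<in>H. f h - c) = (SUP h\<in>H. f h) - c"
proof (rule antisym)
  show "(SUP h\<in>H. f h - c) \<le> (SUP h\<in>H. f h) - c"
    using assms by (intro cSUP_least) (auto intro: cSUP_upper)
  obtain M where M: "\<And>h. h \<in> H \<Longrightarrow> f h \<le> M" using assms(2) by (auto simp: bdd_above_def)
  have b2: "bdd_above ((\<lambda>h. f h - c) ` H)"
    by (rule bdd_aboveI2[where M="M - c"]) (use M in auto)
  have "(SUP h\<in>H. f h) \<le> (SUP h\<in>H. f h - c) + c"
  proof (rule cSUP_least[OF assms(1)])
    fix h assume h: "h \<in> H"
    have "f h - c \<le> (SUP h\<in>H. f h - c)" by (rule cSUP_upper[OF h b2])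
    then show "f h \<le> (SUP h\<in>H. f h - c) + c" by simp
  qed
  then show "(SUP h\<in>H. f h) - c \<le> (SUP h\<in>H. f h - c)" by simp
qed

lemma SUP_diff_bound:
  fixes a b :: "'a \<Rightarrow> real"
  assumes "H \<noteq> {}" "bdd_above (a ` H)" "bdd_above (b ` H)" "\<And>h. h \<in> H \<Longrightarrow> \<bar>a h - b h\<bar> \<le> c"
  shows "\<bar>(SUP h\<in>H. a h) - (SUP h\<in>H. b h)\<bar> \<le> c"
proof -
  have "(SUP h\<in>H. a h) \<le> (SUP h\<in>H. b h) + c"
  proof (rule cSUP_least[OF assms(1)])
    fix h assume h: "h \<in> H"
    have "a h \<le> b h + c" using assms(4)[OF h] by auto
    also have "b h \<le> (SUP h\<in>H. b h)" by (rule cSUP_upper[OF h assms(3)])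
    finally show "a h \<le> (SUP h\<in>H. b h) + c" by simp
  qed
  moreover have "(SUP h\<in>H. b h) \<le> (SUP h\<in>H. a h) + c"
  proof (rule cSUP_least[OF assms(1)])
    fix h assume h: "h \<in> H"
    have "b h \<le> a h + c" using assms(4)[OF h] by auto
    also have "a h \<le> (SUP h\<in>H. a h)" by (rule cSUP_upper[OF h assms(2)])
    finally show "b h \<le> (SUP h\<in>H. a h) + c" by simp
  qed
  ultimately show ?thesis by linarith
qed

definition pbuf :: "('h \<Rightarrow> 'z \<Rightarrow> 'z \<Rightarrow> real) \<Rightarrow> (nat \<Rightarrow> 'z) \<Rightarrow> nat \<Rightarrow> 'z list \<Rightarrow> 'h \<Rightarrow> real" where
  "pbuf l z t B h = (\<Sum>w\<leftarrow>B. l h (z t) w) / real (length B)"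

definition Dl :: "('h \<Rightarrow> 'z \<Rightarrow> 'z \<Rightarrow> real) \<Rightarrow> (nat \<Rightarrow> 'z) \<Rightarrow> nat \<Rightarrow> 'h \<Rightarrow> 'z list \<Rightarrow> 'h \<Rightarrow> real" where
  "Dl l z t g B h = (pen_all l z t h - pen_all l z t g) - (pbuf l z t B h - pbuf l z t B g)"

definition FF :: "('h \<Rightarrow> 'z \<Rightarrow> 'z \<Rightarrow> real) \<Rightarrow> 'h set \<Rightarrow> (nat \<Rightarrow> 'z) \<Rightarrow> nat \<Rightarrow> 'h \<Rightarrow> 'z list \<Rightarrow> real" where
  "FF l H z t g B = (SUP h\<in>H. Dl l z t g B h)"

lemma pen_buf_pbuf: "pen_buf l z Bs t h = pbuf l z t (Bs t) h"
  by (simp add: pen_buf_def pbuf_def)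

lemma pen_all_U: "t \<ge> 2 \<Longrightarrow> pen_all l z t h = measure_pmf.expectation (U z (t-1)) (l h (z t))"
proof -
  assume t: "t \<ge> 2"
  have ne: "{1..t-1} \<noteq> {}" using t by auto
  have "measure_pmf.expectation (U z (t-1)) (l h (z t)) =
        measure_pmf.expectation (pmf_of_set {1..t-1}) (\<lambda>\<tau>. l h (z t) (z \<tau>))"
    by (simp add: U_def)
  also have "\<dots> = (\<Sum>\<tau>=1..t-1. l h (z t) (z \<tau>)) / real (t - 1)"
    using ne by (subst integral_pmf_of_set) auto
  finally show ?thesis by (simp add: pen_all_def)
qed

lemma pbuf_listify: "pbuf l z t (map X [0..<s]) h = (\<Sum>j<s. l h (z t) (X j)) / real s"
  unfolding pbuf_def by (simp add: interv_sum_list_conv_sum_set_nat atLeast0LessThan o_def)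

lemma pbuf_exact: "t \<ge> 1 \<Longrightarrow> pbuf l z t (map z [1..<t]) h = pen_all l z t h"
proof -
  assume t: "t \<ge> 1"
  have "{1..<t} = {1..t-1}" using t by auto
  then show ?thesis unfolding pbuf_def pen_all_def
    by (simp add: interv_sum_list_conv_sum_set_nat o_def)
qed

context
  fixes l :: "'h \<Rightarrow> 'z \<Rightarrow> 'z \<Rightarrow> real" and H Bd
  assumes bnd: "\<And>h a b. h \<in> H \<Longrightarrow> 0 \<le> l h a b \<and> l h a b \<le> Bd"
begin

lemma pen_all_bnd: "h \<in> H \<Longrightarrow> t \<ge> 2 \<Longrightarrow> 0 \<le> pen_all l z t h \<and> pen_all l z t h \<le> Bd"
proof -
  assume h: "h \<in> H" and t: "t \<ge> 2"
  have "(\<Sum>\<tau>=1..t-1. l h (z t) (z \<tau>)) \<le> (\<Sum>\<tau>=1..t-1. Bd)"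
    using bnd[OF h] by (intro sum_mono) auto
  then have "(\<Sum>\<tau>=1..t-1. l h (z t) (z \<tau>)) \<le> real (t - 1) * Bd" by simp
  moreover have "0 \<le> (\<Sum>\<tau>=1..t-1. l h (z t) (z \<tau>))" using bnd[OF h] by (intro sum_nonneg) auto
  moreover have tp: "real (t - 1) > 0" using t by auto
  ultimately have "(\<Sum>\<tau>=1..t-1. l h (z t) (z \<tau>)) / real (t - 1) \<le> Bd"
    "0 \<le> (\<Sum>\<tau>=1..t-1. l h (z t) (z \<tau>)) / real (t - 1)"
    by (simp_all add: pos_divide_le_eq mult.commute)
  then show ?thesis unfolding pen_all_def by simp
qed

lemma pbuf_bnd: "h \<in> H \<Longrightarrow> 0 \<le> pbuf l z t B h \<and> pbuf l z t B h \<le> Bd"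
proof -
  assume h: "h \<in> H"
  have "(\<Sum>w\<leftarrow>B. l h (z t) w) \<le> (\<Sum>w\<leftarrow>B. Bd)"
    using bnd[OF h] by (intro sum_list_mono) auto
  then have le: "(\<Sum>w\<leftarrow>B. l h (z t) w) \<le> real (length B) * Bd" by (simp add: sum_list_triv)
  have ge: "0 \<le> (\<Sum>w\<leftarrow>B. l h (z t) w)" using bnd[OF h] by (intro sum_list_nonneg) auto
  show ?thesis
  proof (cases "B = []")
    case True
    then show ?thesis using bnd[OF h, of "z t" "z t"] by (simp add: pbuf_def)
  next
    case False
    then have "real (length B) > 0" by simp
    then show ?thesis using le ge unfolding pbuf_def by (simp add: pos_divide_le_eq mult.commute)
  qed
qed

lemma Dl_bnd: "g \<in> H \<Longrightarrow> h \<in> H \<Longrightarrow> t \<ge> 2 \<Longrightarrow> \<bar>Dl l z t g B h\<bar> \<le> 2 * Bd"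
  using pen_all_bnd[of h t z] pen_all_bnd[of g t z] pbuf_bnd[of h z t B] pbuf_bnd[of g z t B]
  unfolding Dl_def by (auto simp: abs_le_iff)

lemma bdd_Dl: "g \<in> H \<Longrightarrow> t \<ge> 2 \<Longrightarrow> bdd_above ((\<lambda>h. Dl l z t g B h) ` H)"
  by (rule bdd_aboveI2[where M="2*Bd"]) (use Dl_bnd in \<open>force simp: abs_le_iff\<close>)

lemma regret_bound:
  assumes n: "n \<ge> 2" and g: "g \<in> H"
    and opt: "(\<Sum>t=2..n. pen_all l z t g) = (INF g'\<in>H. \<Sum>t=2..n. pen_all l z t g')"
    and hs: "\<forall>t\<in>{1..n-1}. hs t \<in> H"
  shows "regret_all l H z n hs \<le> regret_buf l H z Bs n hs + (\<Sum>t=2..n. FF l H z t g (Bs t))"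
proof -
  have inf: "(INF g'\<in>H. \<Sum>t=2..n. pen_buf l z Bs t g') \<le> (\<Sum>t=2..n. pen_buf l z Bs t g)"
  proof (rule cINF_lower[OF _ g])
    show "bdd_below ((\<lambda>g'. \<Sum>t=2..n. pen_buf l z Bs t g') ` H)"
      by (rule bdd_belowI2[where m=0]) (auto intro!: sum_nonneg simp: pen_buf_pbuf pbuf_bnd)
  qed
  have "(\<Sum>t=2..n. pen_all l z t (hs (t - 1))) - (\<Sum>t=2..n. pen_all l z t g)
        - ((\<Sum>t=2..n. pen_buf l z Bs t (hs (t - 1))) - (\<Sum>t=2..n. pen_buf l z Bs t g))
      = (\<Sum>t=2..n. Dl l z t g (Bs t) (hs (t - 1)))"
    unfolding Dl_def pen_buf_pbuf by (simp add: sum_subtractf)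
  also have "\<dots> \<le> (\<Sum>t=2..n. FF l H z t g (Bs t))"
  proof (intro sum_mono)
    fix t assume t: "t \<in> {2..n}"
    then have "t - 1 \<in> {1..n-1}" by auto
    then have "hs (t - 1) \<in> H" using hs by blast
    then show "Dl l z t g (Bs t) (hs (t - 1)) \<le> FF l H z t g (Bs t)"
      unfolding FF_def using t by (intro cSUP_upper bdd_Dl g) auto
  qed
  finally show ?thesis using inf opt unfolding regret_all_def regret_buf_def by linarith
qed

end

lemma finite_U: "m \<ge> 1 \<Longrightarrow> finite (set_pmf (U z m))"
  by (simp add: U_def)

context
  fixes l :: "'h \<Rightarrow> 'z \<Rightarrow> 'z \<Rightarrow> real" and H :: "'h set" and Bd Cd c :: real
    and z :: "nat \<Rightarrow> 'z" and s t :: nat and g :: 'h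
  assumes H: "H \<noteq> {}" and bnd: "\<And>h a b. h \<in> H \<Longrightarrow> 0 \<le> l h a b \<and> l h a b \<le> Bd"
    and g: "g \<in> H" and s: "s \<ge> 1" and t: "t \<ge> s + 2"
    and rad: "\<And>s' D w. s' \<ge> 1 \<Longrightarrow> rademacher l H D w s' \<le> Cd * c * sqrt (1 / real s')"
begin

lemma t2: "t \<ge> 2" using t s by simp

lemma finD: "finite (set_pmf (U z (t-1)))" using t2 by (intro finite_U) simp

lemma osc_r: "h \<in> H \<Longrightarrow> \<bar>l h (z t) w - l g (z t) w\<bar> \<le> 2 * (Cd * c)"
proof -
  assume h: "h \<in> H"
  have r1: "rademacher l H (return_pmf w) (z t) 1 \<le> Cd * c" using rad[of 1] by simp
  have "l h (z t) w - l g (z t) w \<le> 2 * (Cd * c)" by (rule osc[OF h g bnd r1])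
  moreover have "l g (z t) w - l h (z t) w \<le> 2 * (Cd * c)" by (rule osc[OF g h bnd r1])
  ultimately show ?thesis by (simp add: abs_le_iff)
qed

abbreviation "PP \<equiv> Pi_pmf {..<s} undefined (\<lambda>_. U z (t-1))"

lemma finPP: "finite (set_pmf PP)"
  using finD by (intro finite_set_Pi_pmf) auto

definition "FX X = FF l H z t g (map X [0..<s])"

lemma bnd_abs: "h \<in> H \<Longrightarrow> \<bar>l h a b\<bar> \<le> Bd"
  using bnd[of h a b] by auto

lemma FX_form:
  "FX X = (SUP h\<in>H. measure_pmf.expectation (U z (t-1)) (l h (z t)) - (\<Sum>j<s. l h (z t) (X j)) / real s)
          - (measure_pmf.expectation (U z (t-1)) (l g (z t)) - (\<Sum>j<s. l g (z t) (X j)) / real s)"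
proof -
  have eq: "Dl l z t g (map X [0..<s]) h =
     (measure_pmf.expectation (U z (t-1)) (l h (z t)) - (\<Sum>j<s. l h (z t) (X j)) / real s)
     - (measure_pmf.expectation (U z (t-1)) (l g (z t)) - (\<Sum>j<s. l g (z t) (X j)) / real s)" for h
    unfolding Dl_def pbuf_listify pen_all_U[OF t2] by simp
  have bd: "bdd_above ((\<lambda>h. measure_pmf.expectation (U z (t-1)) (l h (z t)) - (\<Sum>j<s. l h (z t) (X j)) / real s) ` H)"
  proof (rule bdd_aboveI2[where M=Bd])
    fix h assume h: "h \<in> H"
    have "measure_pmf.expectation (U z (t-1)) (l h (z t)) \<le> Bd"
      using pen_all_bnd[where l=l and H=H and Bd=Bd and z=z, OF bnd h t2] by (simp add: pen_all_U[OF t2])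
    moreover have "0 \<le> (\<Sum>j<s. l h (z t) (X j)) / real s"
      using pbuf_bnd[where l=l and H=H and Bd=Bd and z=z and t=t and B="map X [0..<s]", OF bnd h] by (simp add: pbuf_listify)
    ultimately show "measure_pmf.expectation (U z (t-1)) (l h (z t)) - (\<Sum>j<s. l h (z t) (X j)) / real s \<le> Bd"
      by linarith
  qed
  show ?thesis unfolding FX_def FF_def eq by (rule SUP_minus_const[OF H bd])
qed

lemma EFX: "measure_pmf.expectation PP FX \<le> 2 * (Cd * c * sqrt (1 / real s))"
proof -
  define S where "S X = (SUP h\<in>H. measure_pmf.expectation (U z (t-1)) (l h (z t)) - (\<Sum>j<s. l h (z t) (X j)) / real s)" for X
  define C where "C X = measure_pmf.expectation (U z (t-1)) (l g (z t)) - (\<Sum>j<s. l g (z t) (X j)) / real s" for X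
  have int: "integrable (measure_pmf PP) f" for f :: "_ \<Rightarrow> real"
    by (rule integrable_measure_pmf_finite[OF finPP])
  have "measure_pmf.expectation PP FX = measure_pmf.expectation PP (\<lambda>X. S X - C X)"
    unfolding FX_form S_def C_def ..
  also have "\<dots> = measure_pmf.expectation PP S - measure_pmf.expectation PP C"
    by (rule Bochner_Integration.integral_diff[OF int int])
  also have "measure_pmf.expectation PP C = 0"
  proof -
    have "measure_pmf.expectation PP C = measure_pmf.expectation (U z (t-1)) (l g (z t))
          - measure_pmf.expectation PP (\<lambda>X. (\<Sum>j<s. l g (z t) (X j)) / real s)"
      unfolding C_def by (subst Bochner_Integration.integral_diff[OF int int]) simp
    also have "measure_pmf.expectation PP (\<lambda>X. (\<Sum>j<s. l g (z t) (X j)) / real s)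
             = measure_pmf.expectation (U z (t-1)) (l g (z t))"
      using ED_eq[where f="\<lambda>h w. l h (z t) w" and H=H and D="U z (t-1)" and s=s and B=Bd and d=undefined and h=g,
                  OF H finD s bnd_abs] by simp
    finally show ?thesis by simp
  qed
  also have "measure_pmf.expectation PP S \<le> 2 * rademacher l H (U z (t-1)) (z t) s"
    unfolding S_def rademacher_def
    using symmetrization[where f="\<lambda>h w. l h (z t) w" and H=H and D="U z (t-1)" and s=s and B=Bd and d=undefined,
                  OF H finD s bnd_abs] by simp
  also have "\<dots> \<le> 2 * (Cd * c * sqrt (1 / real s))" using rad[OF s] by simp
  finally show ?thesis by simp
qed

lemma FX_bdiff:
  assumes i: "i \<in> {..<s}" and XY: "\<And>j. j \<noteq> i \<Longrightarrow> X j = Y j"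
  shows "\<bar>FX X - FX Y\<bar> \<le> 4 * (Cd * c) / real s"
proof -
  define r where "r h w = l h (z t) w - l g (z t) w" for h w
  have "\<bar>Dl l z t g (map X [0..<s]) h - Dl l z t g (map Y [0..<s]) h\<bar> \<le> 4 * (Cd * c) / real s"
    if h: "h \<in> H" for h
  proof -
    have "Dl l z t g (map X [0..<s]) h - Dl l z t g (map Y [0..<s]) h
          = (\<Sum>j<s. r h (Y j) - r h (X j)) / real s"
      unfolding Dl_def pbuf_listify r_def
      by (simp add: sum_subtractf diff_divide_distrib)
    also have "(\<Sum>j<s. r h (Y j) - r h (X j)) = r h (Y i) - r h (X i)"
    proof -
      have "(\<Sum>j<s. r h (Y j) - r h (X j)) = (r h (Y i) - r h (X i)) + (\<Sum>j\<in>{..<s} - {i}. r h (Y j) - r h (X j))"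
        using i by (subst sum.remove[of "{..<s}" i]) auto
      also have "(\<Sum>j\<in>{..<s} - {i}. r h (Y j) - r h (X j)) = 0"
        using XY by (intro sum.neutral) auto
      finally show ?thesis by simp
    qed
    finally have eq: "Dl l z t g (map X [0..<s]) h - Dl l z t g (map Y [0..<s]) h = (r h (Y i) - r h (X i)) / real s" .
    have "\<bar>r h (Y i) - r h (X i)\<bar> \<le> 4 * (Cd * c)"
      using osc_r[OF h, of "Y i"] osc_r[OF h, of "X i"] unfolding r_def by linarith
    then show ?thesis unfolding eq using s by (simp add: divide_right_mono)
  qed
  then show ?thesis unfolding FX_def FF_def
    by (intro SUP_diff_bound H bdd_Dl[where l=l and H=H and Bd=Bd, OF bnd g t2])
qed

lemma FX_tail:
  assumes Cd: "Cd > 0" and c: "c \<ge> 0" and u: "u > 0"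
  shows "measure_pmf.prob PP {X. FX X > 2 * (Cd * c * sqrt (1 / real s)) + u}
         \<le> exp (- (u\<^sup>2) / (2 * real s * (4 * (Cd * (c + 1)) / real s)\<^sup>2))"
proof -
  have "0 \<in> {..<s}" using s by simp
  then have ne: "{..<s} \<noteq> {}" by blast
  have "measure_pmf.prob PP {X. FX X > 2 * (Cd * c * sqrt (1 / real s)) + u}
        \<le> measure_pmf.prob PP {X. FX X - measure_pmf.expectation PP FX \<ge> u}"
    using EFX by (intro measure_pmf.finite_measure_mono) auto
  also have "\<dots> \<le> exp (- (u\<^sup>2) / (2 * real (card {..<s}) * (4 * (Cd * (c + 1)) / real s)\<^sup>2))"
  proof (rule mcdiarmid)
    show "0 < 4 * (Cd * (c + 1)) / real s" using Cd c s by auto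
    fix i and X Y :: "nat \<Rightarrow> 'z" assume "i \<in> {..<s}" "\<And>j. j \<noteq> i \<Longrightarrow> X j = Y j"
    then have "\<bar>FX X - FX Y\<bar> \<le> 4 * (Cd * c) / real s" by (rule FX_bdiff)
    also have "\<dots> \<le> 4 * (Cd * (c + 1)) / real s" using Cd s by (intro divide_right_mono) auto
    finally show "\<bar>FX X - FX Y\<bar> \<le> 4 * (Cd * (c + 1)) / real s" .
  qed (use s u finD ne in auto)
  finally show ?thesis by simp
qed

end

lemma FF_exact:
  assumes "H \<noteq> {}" "t \<ge> 1"
  shows "FF l H z t g (map z [1..<t]) = 0"
  unfolding FF_def Dl_def pbuf_exact[OF assms(2)] using assms(1) by simp

lemma FF_Cd0:
  assumes H: "H \<noteq> {}" and bnd: "\<And>h a b. h \<in> H \<Longrightarrow> 0 \<le> l h a b \<and> l h a b \<le> Bd" and g: "g \<in> H"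
    and r0: "\<And>b w. rademacher l H (return_pmf b) w 1 \<le> 0"
  shows "FF l H z t g B = 0"
proof -
  have eq: "l h a b = l g a b" if h: "h \<in> H" for h a b
  proof (rule antisym)
    show "l h a b \<le> l g a b" using osc[OF h g bnd r0, of a b] by simp
    show "l g a b \<le> l h a b" using osc[OF g h bnd r0, of a b] by simp
  qed
  have "Dl l z t g B h = 0" if h: "h \<in> H" for h
  proof -
    have "l h = l g" using eq[OF h] by (intro ext) auto
    then show ?thesis unfolding Dl_def pen_all_def pbuf_def by simp
  qed
  then show ?thesis unfolding FF_def using H by simp
qed

lemma exp_calc:
  assumes Cd: "Cd > 0" and c: "c \<ge> 0" and s: "s \<ge> (1::nat)" and L: "L \<ge> 0"
  shows "(Cd * (c + 1) * sqrt (32 * L / real s))\<^sup>2 / (2 * real s * (4 * (Cd * (c + 1)) / real s)\<^sup>2) = L"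
proof -
  have sp: "real s > 0" using s by simp
  define A where "A = Cd\<^sup>2 * (c + 1)\<^sup>2"
  have A: "A > 0" using Cd c by (simp add: A_def)
  have "(Cd * (c + 1) * sqrt (32 * L / real s))\<^sup>2 = A * (32 * L / real s)"
    using L sp by (simp add: power_mult_distrib A_def)
  moreover have "(4 * (Cd * (c + 1)) / real s)\<^sup>2 = 16 * A / (real s)\<^sup>2"
    by (simp add: power_mult_distrib power_divide A_def)
  moreover have "A * (32 * L / real s) / (2 * real s * (16 * A / (real s)\<^sup>2)) = L"
    using sp A by (simp add: field_simps power2_eq_square)
  ultimately show ?thesis by simp
qed

lemma eps_bound:
  assumes Cd: "Cd > 0" and c: "c \<ge> 0" and s: "s \<ge> (1::nat)" and L: "L \<ge> 1/4"
  shows "2 * (Cd * c * sqrt (1 / real s)) + Cd * (c + 1) * sqrt (32 * L / real s)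
         \<le> Cd * (10 * (c + 1)) * sqrt (L / real s)"
proof -
  have sp: "real s > 0" using s by simp
  define q where "q = sqrt (L / real s)"
  have q0: "q \<ge> 0" using L sp by (simp add: q_def)
  have a: "sqrt (1 / real s) \<le> 2 * q"
  proof -
    have "sqrt (1 / real s) \<le> sqrt (4 * (L / real s))"
      using L sp by (intro real_sqrt_le_mono) (simp add: divide_right_mono)
    also have "\<dots> = sqrt 4 * q" unfolding q_def by (rule real_sqrt_mult)
    also have "sqrt (4::real) = 2" by (rule real_sqrt_unique) auto
    finally show ?thesis by simp
  qed
  have b: "sqrt (32 * L / real s) \<le> 6 * q"
  proof -
    have "sqrt (32 * L / real s) = sqrt 32 * q" by (simp add: q_def real_sqrt_mult[symmetric])
    also have "sqrt 32 \<le> (6::real)"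
      by (rule real_le_lsqrt) auto
    then have "sqrt 32 * q \<le> 6 * q" using q0 by (intro mult_right_mono) auto
    finally show ?thesis .
  qed
  have "2 * (Cd * c * sqrt (1 / real s)) \<le> 2 * (Cd * c * (2 * q))"
    using a Cd c by (intro mult_left_mono) auto
  moreover have "Cd * (c + 1) * sqrt (32 * L / real s) \<le> Cd * (c + 1) * (6 * q)"
    using b Cd c by (intro mult_left_mono) auto
  moreover have "2 * (Cd * c * (2 * q)) + Cd * (c + 1) * (6 * q) \<le> Cd * (10 * (c + 1)) * q"
  proof -
    have "2 * (Cd * c * (2 * q)) + Cd * (c + 1) * (6 * q) = Cd * q * (10 * c + 6)" by (simp add: algebra_simps)
    also have "\<dots> \<le> Cd * q * (10 * (c + 1))" using Cd q0 c by (intro mult_left_mono) auto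
    finally show ?thesis by (simp add: algebra_simps)
  qed
  ultimately show ?thesis unfolding q_def by linarith
qed

theorem lemma22:
  fixes Bd c :: real
  assumes "Bd \<ge> 0" and "c \<ge> 0"
  shows "\<exists>K::real. \<forall>(l :: 'h \<Rightarrow> 'z \<Rightarrow> 'z \<Rightarrow> real) (H :: 'h set) (Cd :: real)
            (z :: nat \<Rightarrow> 'z) (n :: nat) (s :: nat) (\<delta> :: real)
            (hs :: (nat \<Rightarrow> 'z list) \<Rightarrow> nat \<Rightarrow> 'h).
      H \<noteq> {} \<and>
      (\<forall>h\<in>H. \<forall>a b. 0 \<le> l h a b \<and> l h a b \<le> Bd) \<and>
      Cd \<ge> 0 \<and>
      (\<forall>s'\<ge>1. \<forall>D w. rademacher l H D w s' \<le> Cd * c * sqrt (1 / real s')) \<and>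
      (\<exists>g\<in>H. (\<Sum>t=2..n. pen_all l z t g) = (INF g'\<in>H. \<Sum>t=2..n. pen_all l z t g')) \<and>
      (\<forall>Bs. \<forall>t\<in>{1..n-1}. hs Bs t \<in> H) \<and>
      n \<ge> 2 \<and> s \<ge> 1 \<and> 0 < \<delta> \<and> \<delta> < 1
      \<longrightarrow>
      measure_pmf.prob (rsx_traj s z n)
        {Bs. regret_all l H z n (hs Bs)
             \<le> regret_buf l H z Bs n (hs Bs)
                + Cd * real (n - 1) * K * sqrt (ln (real n / \<delta>) / real s)}
      \<ge> 1 - \<delta>"
proof (rule exI[of _ "10 * (c + 1)"], intro allI impI)
  fix l :: "'h \<Rightarrow> 'z \<Rightarrow> 'z \<Rightarrow> real" and H :: "'h set" and Cd :: real
    and z :: "nat \<Rightarrow> 'z" and n s :: nat and \<delta> :: real and hs :: "(nat \<Rightarrow> 'z list) \<Rightarrow> nat \<Rightarrow> 'h"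
  assume A: "H \<noteq> {} \<and>
      (\<forall>h\<in>H. \<forall>a b. 0 \<le> l h a b \<and> l h a b \<le> Bd) \<and>
      Cd \<ge> 0 \<and>
      (\<forall>s'\<ge>1. \<forall>D w. rademacher l H D w s' \<le> Cd * c * sqrt (1 / real s')) \<and>
      (\<exists>g\<in>H. (\<Sum>t=2..n. pen_all l z t g) = (INF g'\<in>H. \<Sum>t=2..n. pen_all l z t g')) \<and>
      (\<forall>Bs. \<forall>t\<in>{1..n-1}. hs Bs t \<in> H) \<and>
      n \<ge> 2 \<and> s \<ge> 1 \<and> 0 < \<delta> \<and> \<delta> < 1"
  have H: "H \<noteq> {}" using A by blast
  have bnd: "\<And>h a b. h \<in> H \<Longrightarrow> 0 \<le> l h a b \<and> l h a b \<le> Bd" using A by blast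
  have Cd0: "Cd \<ge> 0" using A by blast
  have rad: "\<And>s' D w. s' \<ge> 1 \<Longrightarrow> rademacher l H D w s' \<le> Cd * c * sqrt (1 / real s')" using A by blast
  obtain g where g: "g \<in> H" and opt: "(\<Sum>t=2..n. pen_all l z t g) = (INF g'\<in>H. \<Sum>t=2..n. pen_all l z t g')"
    using A by blast
  have hs: "\<And>Bs. \<forall>t\<in>{1..n-1}. hs Bs t \<in> H" using A by blast
  have n2: "n \<ge> 2" and s1: "s \<ge> 1" and d0: "0 < \<delta>" and d1: "\<delta> < 1" using A by blast+
  define L where "L = ln (real n / \<delta>)"
  have L: "L \<ge> 2 / 3"
  proof -
    have "real n \<ge> 2" using n2 by simp
    then have "real n / \<delta> \<ge> 2" using d0 d1 by (simp add: le_divide_eq)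
    then have "ln 2 \<le> L" unfolding L_def by (subst ln_le_cancel_iff) auto
    then show ?thesis using ln2_ge_two_thirds by linarith
  qed
  define K :: real where "K = 10 * (c + 1)"
  define T where "T = {Bs. regret_all l H z n (hs Bs) \<le> regret_buf l H z Bs n (hs Bs)
                + Cd * real (n - 1) * K * sqrt (L / real s)}"
  have RB: "regret_all l H z n (hs Bs) \<le> regret_buf l H z Bs n (hs Bs) + (\<Sum>t=2..n. FF l H z t g (Bs t))" for Bs
    by (rule regret_bound[OF bnd n2 g opt hs])
  have "measure_pmf.prob (rsx_traj s z n) T \<ge> 1 - \<delta>"
  proof (cases "Cd = 0")
    case True
    have r0: "rademacher l H (return_pmf b) w 1 \<le> 0" for b w using rad[of 1 "return_pmf b" w] True by simp
    have "T = UNIV"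
    proof -
      have "regret_all l H z n (hs Bs) \<le> regret_buf l H z Bs n (hs Bs)" for Bs
        using RB[of Bs] FF_Cd0[OF H bnd g r0] by simp
      then show ?thesis unfolding T_def using True by auto
    qed
    then show ?thesis using d0 by simp
  next
    case False
    then have Cd: "Cd > 0" using Cd0 by simp
    define u where "u = Cd * (c + 1) * sqrt (32 * L / real s)"
    define \<epsilon> where "\<epsilon> = 2 * (Cd * c * sqrt (1 / real s)) + u"
    have u0: "u > 0" unfolding u_def using Cd assms(2) L s1 by (intro mult_pos_pos) auto
    have e0: "\<epsilon> > 0" unfolding \<epsilon>_def using u0 Cd assms(2) by (simp add: add_nonneg_pos)
    define G where "G = {Bs. \<forall>t\<in>{2..n}. FF l H z t g (Bs t) \<le> \<epsilon>}"
    have GT: "G \<subseteq> T"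
    proof
      fix Bs assume "Bs \<in> G"
      then have le: "FF l H z t g (Bs t) \<le> \<epsilon>" if "t \<in> {2..n}" for t using that unfolding G_def by blast
      have "(\<Sum>t=2..n. FF l H z t g (Bs t)) \<le> (\<Sum>t=2..n. \<epsilon>)" by (intro sum_mono le)
      also have "\<dots> = real (n - 1) * \<epsilon>" using n2 by simp
      also have "\<dots> \<le> real (n - 1) * (Cd * K * sqrt (L / real s))"
        unfolding \<epsilon>_def u_def K_def using eps_bound[OF Cd assms(2) s1, of L] L by (intro mult_left_mono) auto
      finally show "Bs \<in> T" unfolding T_def using RB[of Bs] by (simp add: algebra_simps)
    qed
    have bad: "measure_pmf.prob (rsx_traj s z n) {Bs. \<epsilon> < FF l H z t g (Bs t)} \<le> \<delta> / real n"
      if t: "t \<in> {2..n}" for t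
    proof -
      have "measure_pmf.prob (rsx_traj s z n) {Bs. \<epsilon> < FF l H z t g (Bs t)}
          = measure_pmf.prob (map_pmf (\<lambda>Bs. Bs t) (rsx_traj s z n)) {B. \<epsilon> < FF l H z t g B}"
        by (simp add: measure_map_pmf vimage_def)
      also have "\<dots> \<le> \<delta> / real n"
      proof (cases "t \<le> s + 1")
        case True
        then show ?thesis using marginal[OF s1, of t n z] t FF_exact[where l=l and z=z and g=g and t=t, OF H] e0 d0 by auto
      next
        case False
        then have ts: "t \<ge> s + 2" by simp
        have "measure_pmf.prob (map_pmf (\<lambda>Bs. Bs t) (rsx_traj s z n)) {B. \<epsilon> < FF l H z t g B}
            = measure_pmf.prob (PP z s t) {X. \<epsilon> < FX l H z s t g X}"
          using marginal[OF s1, of t n z] t False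
          by (simp add: iid_def measure_map_pmf vimage_def FX_def[OF H bnd g s1 ts rad])
        also have "\<dots> \<le> exp (- (u\<^sup>2) / (2 * real s * (4 * (Cd * (c + 1)) / real s)\<^sup>2))"
          unfolding \<epsilon>_def by (rule FX_tail[OF H bnd g s1 ts rad Cd assms(2) u0])
        also have "\<dots> = exp (- L)"
          unfolding u_def using exp_calc[OF Cd assms(2) s1, of L] L by simp
        also have "\<dots> = \<delta> / real n"
          unfolding L_def using d0 n2 by (simp add: exp_minus)
        finally show ?thesis .
      qed
      finally show ?thesis .
    qed
    have "UNIV - G = (\<Union>t\<in>{2..n}. {Bs. \<epsilon> < FF l H z t g (Bs t)})"
      unfolding G_def by (auto simp: not_le)
    then have "measure_pmf.prob (rsx_traj s z n) (UNIV - G) \<le> (\<Sum>t\<in>{2..n}. measure_pmf.prob (rsx_traj s z n) {Bs. \<epsilon> < FF l H z t g (Bs t)})"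
      by (simp add: measure_pmf.finite_measure_subadditive_finite)
    also have "\<dots> \<le> (\<Sum>t\<in>{2..n}. \<delta> / real n)" by (intro sum_mono bad)
    also have "\<dots> = real (n - 1) * (\<delta> / real n)" using n2 by simp
    also have "\<dots> \<le> \<delta>"
    proof -
      have "real (n - 1) \<le> real n" by simp
      then have "real (n - 1) * (\<delta> / real n) \<le> real n * (\<delta> / real n)"
        using d0 by (intro mult_right_mono) auto
      also have "\<dots> = \<delta>" using n2 by simp
      finally show ?thesis .
    qed
    finally have pc: "measure_pmf.prob (rsx_traj s z n) (UNIV - G) \<le> \<delta>" .
    have "measure_pmf.prob (rsx_traj s z n) G = 1 - measure_pmf.prob (rsx_traj s z n) (UNIV - G)"
      using measure_pmf.prob_compl[of "UNIV - G" "rsx_traj s z n"] by (simp add: Diff_Diff_Int)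
    then have "measure_pmf.prob (rsx_traj s z n) G \<ge> 1 - \<delta>" using pc by simp
    moreover have "measure_pmf.prob (rsx_traj s z n) G \<le> measure_pmf.prob (rsx_traj s z n) T"
      using GT by (intro measure_pmf.finite_measure_mono) auto
    ultimately show ?thesis by simp
  qed
  then show "measure_pmf.prob (rsx_traj s z n)
        {Bs. regret_all l H z n (hs Bs)
             \<le> regret_buf l H z Bs n (hs Bs)
                + Cd * real (n - 1) * (10 * (c + 1)) * sqrt (ln (real n / \<delta>) / real s)}
      \<ge> 1 - \<delta>" unfolding T_def K_def L_def .
qed

end
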